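(* Let $a>0$, $b>0$, $c\ge 0$ be constants and consider, for a function $u(t,x)$ on $t>0$, $x>0$, the non-linear Black--Scholes equation $$u_t+ax^2u_{xx}+bx^3u_{xx}^2+cxu_x-cu=0.$$ Define new variables $(\bar t,\bar x,\bar u)$ by if $c=0$: $\bar t=t$, $\bar x=\log\frac{x}{b}$, $\bar u=\frac{bu}{x}+\frac a2\log\frac xb-\frac{a^2}{4}t$; if $c>0$: $\bar t=ct$, $\bar x=\log\frac{cx}{b}-ct$, $\bar u=\frac{bu}{cx}+\frac{a}{2c}\log\frac{cx}{b}-\frac a2\left(1+\frac{a}{2c}\right)t$. Then $u(t,x)$ is a (sufficiently smooth) solution of the Black--Scholes equation above if and only if $\bar u$, regarded as a function of $(\bar t,\bar x)$, satisfies $$\bar u_{\bar t}+\left(\bar u_{\bar x}+\bar u_{\bar x\bar x}\right)^2=0.$$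
   Context: Here $\log$ is the natural logarithm. In the formula for $\bar u$ the variable $t$ is the original time variable. *)

theory Defs
  imports "HOL-Analysis.Analysis"
begin

definition pt :: "(real \<Rightarrow> real \<Rightarrow> real) \<Rightarrow> real \<Rightarrow> real \<Rightarrow> real" where
  "pt f t x = deriv (\<lambda>s. f s x) t"

definition px :: "(real \<Rightarrow> real \<Rightarrow> real) \<Rightarrow> real \<Rightarrow> real \<Rightarrow> real" where
  "px f t x = deriv (\<lambda>y. f t y) x"

definition pxx :: "(real \<Rightarrow> real \<Rightarrow> real) \<Rightarrow> real \<Rightarrow> real \<Rightarrow> real" where
  "pxx f t x = deriv (\<lambda>y. px f t y) x"

text \<open>The point (t, x) with t > 0, x > 0 is the unique preimage of (tb, xb) under the
  change of variables:
  c = 0:  tb = t, xb = ln (x/b)        i.e.  t = tb,   x = b * exp xb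
  c > 0:  tb = c t, xb = ln (c x/b) - c t  i.e.  t = tb/c, x = (b/c) * exp (xb + tb).
  ubar is then given by the formulas of the paper in terms of t, x, u(t,x).\<close>
definition ubar :: "real \<Rightarrow> real \<Rightarrow> real \<Rightarrow> (real \<Rightarrow> real \<Rightarrow> real) \<Rightarrow> real \<Rightarrow> real \<Rightarrow> real" where
  "ubar a b c u tb xb =
     (if c = 0 then
        (let t = tb; x = b * exp xb in
           b * u t x / x + a / 2 * ln (x / b) - a^2 / 4 * t)
      else
        (let t = tb / c; x = b / c * exp (xb + tb) in
           b * u t x / (c * x) + a / (2 * c) * ln (c * x / b)
             - a / 2 * (1 + a / (2 * c)) * t))"

end

theory Submission
  imports Defs
begin

lemma chain2:
  assumes dF: "(\<lambda>p. f (fst p) (snd p)) differentiable (at (gA s, gB s))"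
  and hA: "(gA has_real_derivative dA) (at s)" and hB: "(gB has_real_derivative dB) (at s)"
  shows "((\<lambda>s. f (gA s) (gB s)) has_real_derivative
           (dA * pt f (gA s) (gB s) + dB * px f (gA s) (gB s))) (at s)"
proof -
  obtain F' where F: "((\<lambda>p. f (fst p) (snd p)) has_derivative F') (at (gA s, gB s))"
    using dF differentiable_def by blast
  have lin: "linear F'" using F has_derivative_linear by blast
  have sc: "F' (h *\<^sub>R v) = h * F' v" for h v using linear_scale[OF lin] by simp
  have add: "F' (v + w) = F' v + F' w" for v w using linear_add[OF lin] by simp
  have e1: "F' (h, 0) = h * F' (1,0)" for h using sc[of h "(1,0)"] by simp
  have e2: "F' (0, h) = h * F' (0,1)" for h using sc[of h "(0,1)"] by simp
  have dt: "((\<lambda>s'. f s' (gB s)) has_real_derivative F' (1,0)) (at (gA s))"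
  proof -
    have "((\<lambda>s'. (s', gB s)) has_derivative (\<lambda>h. (h, 0))) (at (gA s))"
      by (auto intro!: derivative_eq_intros)
    from diff_chain_at[OF this F]
    have "(((\<lambda>p. f (fst p) (snd p)) \<circ> (\<lambda>s'. (s', gB s))) has_derivative (F' \<circ> (\<lambda>h. (h, 0)))) (at (gA s))"
      by simp
    then have "((\<lambda>s'. f s' (gB s)) has_derivative (\<lambda>h. F' (h,0))) (at (gA s))" by (simp add: o_def)
    then show ?thesis unfolding has_field_derivative_def
      by (rule has_derivative_eq_rhs) (rule ext, metis e1 mult.commute)
  qed
  have dx: "((\<lambda>y. f (gA s) y) has_real_derivative F' (0,1)) (at (gB s))"
  proof -
    have "((\<lambda>y. (gA s, y)) has_derivative (\<lambda>h. (0, h))) (at (gB s))"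
      by (auto intro!: derivative_eq_intros)
    from diff_chain_at[OF this F]
    have "(((\<lambda>p. f (fst p) (snd p)) \<circ> (\<lambda>y. (gA s, y))) has_derivative (F' \<circ> (\<lambda>h. (0, h)))) (at (gB s))"
      by simp
    then have "((\<lambda>y. f (gA s) y) has_derivative (\<lambda>h. F' (0,h))) (at (gB s))" by (simp add: o_def)
    then show ?thesis unfolding has_field_derivative_def
      by (rule has_derivative_eq_rhs) (rule ext, metis e2 mult.commute)
  qed
  have pt: "pt f (gA s) (gB s) = F' (1,0)" unfolding pt_def using dt DERIV_imp_deriv by blast
  have px: "px f (gA s) (gB s) = F' (0,1)" unfolding px_def using dx DERIV_imp_deriv by blast
  have g: "((\<lambda>s. (gA s, gB s)) has_derivative (\<lambda>h. (dA * h, dB * h))) (at s)"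
    using hA hB unfolding has_field_derivative_def by (rule has_derivative_Pair)
  from diff_chain_at[OF g F]
  have "(((\<lambda>p. f (fst p) (snd p)) \<circ> (\<lambda>s. (gA s, gB s))) has_derivative (F' \<circ> (\<lambda>h. (dA * h, dB * h)))) (at s)"
    by simp
  then have "((\<lambda>s. f (gA s) (gB s)) has_derivative (\<lambda>h. F' (dA * h, dB * h))) (at s)" by (simp add: o_def)
  then show ?thesis unfolding has_field_derivative_def
  proof (rule has_derivative_eq_rhs)
    show "(\<lambda>h. F' (dA * h, dB * h)) = (*) (dA * pt f (gA s) (gB s) + dB * px f (gA s) (gB s))"
    proof
      fix h
      have "F' (dA * h, dB * h) = F' (dA*h, 0) + F' (0, dB*h)" using add[of "(dA*h,0)" "(0,dB*h)"] by simp
      then show "F' (dA * h, dB * h) = (dA * pt f (gA s) (gB s) + dB * px f (gA s) (gB s)) * h"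
        using e1[of "dA*h"] e2[of "dB*h"] pt px by (simp add: algebra_simps)
    qed
  qed
qed


definition V :: "real \<Rightarrow> real \<Rightarrow> real \<Rightarrow> real \<Rightarrow> (real \<Rightarrow> real \<Rightarrow> real) \<Rightarrow> real \<Rightarrow> real \<Rightarrow> real" where
  "V a b c m u tb y = exp (-(y + m*c*tb)) * u (m*tb) (b*m*exp (y + m*c*tb)) + m*a/2*y - (m*a/2)^2*tb"

lemma EX: "exp (-z) * (k*exp z) = (k::real)" by (simp add: exp_minus)

lemma px_px: "px (px u) t x = pxx u t x" by (simp add: px_def pxx_def)

context
  fixes a b c m :: real and u :: "real \<Rightarrow> real \<Rightarrow> real"
  assumes m: "m > 0" and b: "b > 0" and c: "c \<ge> 0"
    and s1: "\<forall>t>0. \<forall>x>0. (\<lambda>p. u (fst p) (snd p)) differentiable (at (t, x))"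
    and s2: "\<forall>t>0. \<forall>x>0. (\<lambda>p. px u (fst p) (snd p)) differentiable (at (t, x))"
begin

lemma dX: "((\<lambda>y. b*m*exp (y + m*c*tb)) has_real_derivative b*m*exp (y + m*c*tb)) (at y)"
  by (auto intro!: derivative_eq_intros)

lemma dXt: "((\<lambda>r. b*m*exp (y + m*c*r)) has_real_derivative b*m*exp (y + m*c*r) * (m*c)) (at r)"
  by (auto intro!: derivative_eq_intros)

lemma pxV:
  assumes tb: "tb > 0"
  shows "px (V a b c m u) tb y = - exp (-(y + m*c*tb)) * u (m*tb) (b*m*exp (y + m*c*tb))
           + b*m * px u (m*tb) (b*m*exp (y + m*c*tb)) + m*a/2"
proof -
  let ?X = "\<lambda>y. b*m*exp (y + m*c*tb)"
  have pos: "?X y > 0" "m*tb > 0" using m b tb by auto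
  have hu: "((\<lambda>y. u (m*tb) (?X y)) has_real_derivative
      (0 * pt u (m*tb) (?X y) + ?X y * px u (m*tb) (?X y))) (at y)"
    using chain2[where f=u and gA="\<lambda>_. m*tb" and gB= ?X and s=y and dA=0 and dB="?X y"] s1 pos dX by auto
  have "((\<lambda>y. V a b c m u tb y) has_real_derivative
      (- exp (-(y + m*c*tb)) * u (m*tb) (?X y) + exp (-(y + m*c*tb)) * (?X y * px u (m*tb) (?X y)) + m*a/2)) (at y)"
    unfolding V_def
    by (rule derivative_eq_intros hu refl | simp)+
  moreover have "exp (-(y + m*c*tb)) * ?X y = b*m"
    using EX[of "y + m*c*tb" "b*m"] by (simp only: mult.assoc)
  ultimately show ?thesis unfolding px_def
    by (metis (no_types, lifting) DERIV_imp_deriv mult.assoc)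
qed


lemma pxxV:
  assumes tb: "tb > 0"
  shows "pxx (V a b c m u) tb y = exp (-(y + m*c*tb)) * u (m*tb) (b*m*exp (y + m*c*tb))
           - b*m * px u (m*tb) (b*m*exp (y + m*c*tb))
           + b*m * (b*m*exp (y + m*c*tb)) * pxx u (m*tb) (b*m*exp (y + m*c*tb))"
proof -
  let ?X = "\<lambda>y. b*m*exp (y + m*c*tb)"
  have pos: "?X y > 0" "m*tb > 0" using m b tb by auto
  have hu: "((\<lambda>y. u (m*tb) (?X y)) has_real_derivative
      (0 * pt u (m*tb) (?X y) + ?X y * px u (m*tb) (?X y))) (at y)"
    using chain2[where f=u and gA="\<lambda>_. m*tb" and gB= ?X and s=y and dA=0 and dB="?X y"] s1 pos dX by auto
  have hpu: "((\<lambda>y. px u (m*tb) (?X y)) has_real_derivative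
      (0 * pt (px u) (m*tb) (?X y) + ?X y * pxx u (m*tb) (?X y))) (at y)"
    using chain2[where f="px u" and gA="\<lambda>_. m*tb" and gB= ?X and s=y and dA=0 and dB="?X y"] s2 pos dX
    by (auto simp: px_px)
  have e: "px (V a b c m u) tb = (\<lambda>y. - exp (-(y + m*c*tb)) * u (m*tb) (?X y)
           + b*m * px u (m*tb) (?X y) + m*a/2)"
    using pxV[OF tb] by (simp add: fun_eq_iff)
  have "((\<lambda>y. - exp (-(y + m*c*tb)) * u (m*tb) (?X y)
           + b*m * px u (m*tb) (?X y) + m*a/2) has_real_derivative
      (exp (-(y + m*c*tb)) * u (m*tb) (?X y) - exp (-(y + m*c*tb)) * (?X y * px u (m*tb) (?X y))
        + b*m * (?X y * pxx u (m*tb) (?X y)))) (at y)"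
    by (rule derivative_eq_intros hu hpu refl | simp)+
  note D = DERIV_imp_deriv[OF this]
  have E: "exp (-(y + m*c*tb)) * (?X y * w) = b*m*w" for w
    using EX[of "y + m*c*tb" "b*m"] by (metis mult.assoc)
  show ?thesis unfolding pxx_def e D E by simp
qed

lemma ptV:
  assumes tb: "tb > 0"
  shows "pt (V a b c m u) tb y = - m*c*exp (-(y + m*c*tb)) * u (m*tb) (b*m*exp (y + m*c*tb))
           + m * exp (-(y + m*c*tb)) * pt u (m*tb) (b*m*exp (y + m*c*tb))
           + m*c*(b*m) * px u (m*tb) (b*m*exp (y + m*c*tb)) - (m*a/2)^2"
proof -
  let ?X = "\<lambda>r. b*m*exp (y + m*c*r)"
  have pos: "?X tb > 0" "m*tb > 0" using m b tb by auto
  have dm: "((\<lambda>r. m*r) has_real_derivative m) (at tb)" by (auto intro!: derivative_eq_intros)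
  have hu: "((\<lambda>r. u (m*r) (?X r)) has_real_derivative
      (m * pt u (m*tb) (?X tb) + (?X tb * (m*c)) * px u (m*tb) (?X tb))) (at tb)"
    using chain2[where f=u and gA="\<lambda>r. m*r" and gB= ?X and s=tb and dA=m and dB="?X tb * (m*c)"] s1 pos dXt dm by auto
  have "((\<lambda>r. V a b c m u r y) has_real_derivative
      (exp (-(y + m*c*tb)) * (-(m*c)) * u (m*tb) (?X tb) + exp (-(y + m*c*tb)) * (m * pt u (m*tb) (?X tb) + (?X tb * (m*c)) * px u (m*tb) (?X tb)) - (m*a/2)^2)) (at tb)"
    unfolding V_def
    by (rule derivative_eq_intros hu refl | simp)+
  note D = DERIV_imp_deriv[OF this]
  have E: "exp (-(y + m*c*tb)) * (?X tb * w) = b*m*w" for w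
    using EX[of "y + m*c*tb" "b*m"] by (metis mult.assoc)
  have E2: "exp (-(y + m*c*tb)) * (?X tb * (m*c) * w) = m*c*(b*m)*w" for w
    using E[of "m*c*w"] by (simp add: algebra_simps)
  have E3: "exp (y + c * (m * tb)) * exp (- y - c * (m * tb)) = 1"
    by (metis add_diff_cancel_left' diff_add_cancel diff_minus_eq_add exp_minus_inverse minus_diff_eq uminus_add_conv_diff)
  show ?thesis unfolding pt_def D by (simp add: distrib_left E3 algebra_simps)
qed

end


lemma alg:
  fixes X e m a b c ut u ux uxx :: real
  assumes X: "X > 0" and e: "e = b*m/X"
  shows "- m*c*e*u + m*e*ut + m*c*(b*m)*ux - (m*a/2)^2
      + ((- e*u + b*m*ux + m*a/2) + (e*u - b*m*ux + b*m*X*uxx))^2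
    = e*m*(ut + a*X^2*uxx + b*X^3*uxx^2 + c*X*ux - c*u)"
  using X unfolding e by (simp add: field_simps power2_eq_square power3_eq_cube)

lemma ubar_V:
  assumes b: "b > 0" and c: "c \<ge> 0"
  shows "ubar a b c u = V a b c (if c = 0 then 1 else 1/c) u"
proof (intro ext)
  fix tb xb
  show "ubar a b c u tb xb = V a b c (if c = 0 then 1 else 1/c) u tb xb"
  proof (cases "c = 0")
    case True
    then show ?thesis using b unfolding ubar_def V_def Let_def
      by (simp add: exp_minus field_simps power2_eq_square)
  next
    case False
    then have cp: "c > 0" using c by simp
    have l: "ln (c * (b / c * exp (xb + tb)) / b) = xb + tb" using cp b by simp
    have e1: "exp (tb + xb) * exp (- tb - xb) = 1"
      using exp_add[of "tb+xb" "- tb - xb", symmetric] by simp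
    show ?thesis using b cp False unfolding ubar_def V_def Let_def l
      by (simp add: exp_minus field_simps power2_eq_square e1)
  qed
qed


theorem mainTheorem1:
  fixes a b c :: real and u :: "real \<Rightarrow> real \<Rightarrow> real"
  assumes "a > 0" and "b > 0" and "c \<ge> 0"
    and smooth1: "\<forall>t>0. \<forall>x>0. (\<lambda>p. u (fst p) (snd p)) differentiable (at (t, x))"
    and smooth2: "\<forall>t>0. \<forall>x>0. (\<lambda>p. px u (fst p) (snd p)) differentiable (at (t, x))"
  shows "(\<forall>t>0. \<forall>x>0.
            pt u t x + a * x^2 * pxx u t x + b * x^3 * (pxx u t x)^2
              + c * x * px u t x - c * u t x = 0)
     \<longleftrightarrow> (\<forall>tb>0. \<forall>xb.
            pt (ubar a b c u) tb xb
              + (px (ubar a b c u) tb xb + pxx (ubar a b c u) tb xb)^2 = 0)"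
proof -
  define m where "m = (if c = 0 then 1 else 1/c)"
  have m: "m > 0" using assms(3) by (simp add: m_def)
  have U: "ubar a b c u = V a b c m u" unfolding m_def using assms(2,3) by (rule ubar_V)
  define L where "L t x = pt u t x + a * x^2 * pxx u t x + b * x^3 * (pxx u t x)^2
              + c * x * px u t x - c * u t x" for t x
  have key: "pt (ubar a b c u) tb y + (px (ubar a b c u) tb y + pxx (ubar a b c u) tb y)^2
     = exp (-(y + m*c*tb)) * m * L (m*tb) (b*m*exp (y + m*c*tb))" if tb: "tb > 0" for tb y
  proof -
    have X: "b*m*exp (y + m*c*tb) > 0" using m assms(2) by simp
    have e: "exp (-(y + m*c*tb)) = b*m / (b*m*exp (y + m*c*tb))"
    proof -
      have "b*m \<noteq> 0" using m assms(2) by simp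
      then have "b*m / (b*m*exp (y + m*c*tb)) = inverse (exp (y + m*c*tb))"
        by (simp add: field_simps)
      then show ?thesis by (simp only: exp_minus)
    qed
    show ?thesis unfolding U L_def
        pxV[OF m assms(2,3) smooth1 smooth2 tb] pxxV[OF m assms(2,3) smooth1 smooth2 tb]
        ptV[OF m assms(2,3) smooth1 smooth2 tb]
      by (rule alg[OF X e])
  qed
  show ?thesis
  proof
    assume H: "\<forall>t>0. \<forall>x>0. pt u t x + a * x^2 * pxx u t x + b * x^3 * (pxx u t x)^2
              + c * x * px u t x - c * u t x = 0"
    show "\<forall>tb>0. \<forall>xb. pt (ubar a b c u) tb xb
              + (px (ubar a b c u) tb xb + pxx (ubar a b c u) tb xb)^2 = 0"
    proof (intro allI impI)
      fix tb xb :: real assume tb: "tb > 0"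
      have "L (m*tb) (b*m*exp (xb + m*c*tb)) = 0" unfolding L_def
        using H m tb assms(2) by simp
      then show "pt (ubar a b c u) tb xb
              + (px (ubar a b c u) tb xb + pxx (ubar a b c u) tb xb)^2 = 0"
        using key[OF tb] by simp
    qed
  next
    assume H: "\<forall>tb>0. \<forall>xb. pt (ubar a b c u) tb xb
              + (px (ubar a b c u) tb xb + pxx (ubar a b c u) tb xb)^2 = 0"
    show "\<forall>t>0. \<forall>x>0. pt u t x + a * x^2 * pxx u t x + b * x^3 * (pxx u t x)^2
              + c * x * px u t x - c * u t x = 0"
    proof (intro allI impI)
      fix t x :: real assume t: "t > 0" and x: "x > 0"
      define tb where "tb = t / m"
      define y where "y = ln (x / (b*m)) - m*c*tb"
      have tb: "tb > 0" using t m by (simp add: tb_def)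
      have mt: "m * tb = t" using m by (simp add: tb_def)
      have xx: "b*m*exp (y + m*c*tb) = x" using x m assms(2) by (simp add: y_def)
      have "exp (-(y + m*c*tb)) * m * L t x = 0"
        using key[OF tb, of y] H tb unfolding mt xx by simp
      then have "L t x = 0" using m by simp
      then show "pt u t x + a * x^2 * pxx u t x + b * x^3 * (pxx u t x)^2
              + c * x * px u t x - c * u t x = 0" unfolding L_def .
    qed
  qed
qed

end
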